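(* Let $p>q>0$ be relatively prime integers with Hirzebruch–Jung continued fraction expansion \[ \frac{p}{q} = [a_1,\ldots,a_n] = a_1 - \cfrac{1}{a_2 - \cfrac{1}{\ddots - \cfrac{1}{a_n}}}, \qquad a_i\geq 2. \] Then $\prod_{i=1}^n (a_i-1) \leq p$. Moreover, the inequality still holds if one (but not both) of the factors $a_1-1$ and $a_n-1$ is replaced by $a_1$ or $a_n$ respectively.
   Context: The Hirzebruch–Jung expansion is computed recursively: $p_1/q_1=p/q$, $p_i/q_i = a_i - q_{i+1}/p_{i+1}$ with $p_{i+1}=q_i$ and $0<q_{i+1}<p_{i+1}$, terminating when $q_n=1$. *)

theory Defs
  imports Complex_Main
begin

text \<open>Value of the Hirzebruch--Jung continued fraction
  [a_1,...,a_n] = a_1 - 1/(a_2 - 1/(... - 1/a_n)).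
  The empty list is never used (value 0 as a dummy).\<close>
fun hjcf :: "int list \<Rightarrow> rat" where
  "hjcf [] = 0"
| "hjcf [a] = of_int a"
| "hjcf (a # b # as) = of_int a - 1 / hjcf (b # as)"

end

theory Submission
  imports Defs
begin

fun nd :: "int list \<Rightarrow> int \<times> int" where
  "nd [] = (1, 0)"
| "nd (a # r) = (a * fst (nd r) - snd (nd r), fst (nd r))"

lemma nd_basic:
  assumes "\<forall>a \<in> set as. a \<ge> 2"
  shows "fst (nd as) - snd (nd as) \<ge> prod_list (map (\<lambda>a. a - 1) as)
    \<and> snd (nd as) \<ge> 0
    \<and> (as \<noteq> [] \<longrightarrow> fst (nd as) \<ge> hd as * prod_list (map (\<lambda>a. a - 1) (tl as)))
    \<and> prod_list (map (\<lambda>a. a - 1) as) \<ge> 1"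
  using assms
proof (induction as)
  case Nil
  then show ?case by simp
next
  case (Cons a r)
  define N where "N = fst (nd r)"
  define D where "D = snd (nd r)"
  define P where "P = prod_list (map (\<lambda>a. a - 1) r)"
  have a: "a \<ge> 2" using Cons.prems by simp
  have IH: "N - D \<ge> P" "D \<ge> 0" "P \<ge> 1" using Cons N_def D_def P_def by auto
  have "D*2 \<le> D*a" using a IH by (simp add: mult_left_mono)
  then have "(a-1)*N - D \<ge> (a-1)*(N-D)" by (simp add: algebra_simps)
  moreover have "(a-1)*(N-D) \<ge> (a-1)*P" using a IH by (simp add: mult_left_mono)
  moreover have "a*N - D = a*(N-D) + (a-1)*D" by (simp add: algebra_simps)
  moreover have "a*(N-D) \<ge> a*P" using a IH by (simp add: mult_left_mono)
  moreover have "(a-1)*D \<ge> 0" using a IH by simp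
  moreover have "(a-1)*P \<ge> 1" using a IH
    using mult_mono[of 1 "a-1" 1 P] by simp
  ultimately have "a*N - D - N \<ge> (a-1)*P" "a*N - D \<ge> a*P" "(a-1)*P \<ge> 1"
    by (simp_all add: algebra_simps)
  then show ?case using N_def D_def P_def IH
    by (simp add: algebra_simps)
qed

lemma nd_last:
  assumes "\<forall>a \<in> set as. a \<ge> 2" "as \<noteq> []"
  shows "fst (nd as) \<ge> prod_list (map (\<lambda>a. a - 1) (butlast as)) * last as"
  using assms
proof (induction as)
  case Nil
  then show ?case by simp
next
  case (Cons a r)
  show ?case
  proof (cases "r = []")
    case True
    then show ?thesis by simp
  next
    case False
    define N where "N = fst (nd r)"
    define D where "D = snd (nd r)"
    have a: "a \<ge> 2" using Cons.prems by simp
    have b: "N - D \<ge> 0" "D \<ge> 0" using nd_basic[of r] Cons.prems N_def D_def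
      by (auto intro: order_trans[rotated])
    have IH: "N \<ge> prod_list (map (\<lambda>a. a - 1) (butlast r)) * last r"
      using Cons False N_def by auto
    have "a*N - D \<ge> (a-1)*N" using b by (simp add: algebra_simps)
    moreover have "(a-1)*N \<ge> (a-1)*(prod_list (map (\<lambda>a. a - 1) (butlast r)) * last r)"
      using IH a by (simp add: mult_left_mono)
    ultimately show ?thesis using False N_def D_def by (simp add: algebra_simps)
  qed
qed

lemma nd_hjcf:
  assumes "\<forall>a \<in> set as. a \<ge> 2" "as \<noteq> []"
  shows "hjcf as = of_int (fst (nd as)) / of_int (snd (nd as))"
  using assms
proof (induction as rule: hjcf.induct)
  case 1
  then show ?case by simp
next
  case (2 a)
  then show ?case by simp
next
  case (3 a b r)
  define N where "N = fst (nd (b # r))"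
  define D where "D = snd (nd (b # r))"
  have "N - D \<ge> 1" using nd_basic[of "b#r"] 3(2) N_def D_def by auto
  moreover have "D \<ge> 0" using nd_basic[of "b#r"] 3(2) N_def D_def by auto
  ultimately have N: "N > 0" by linarith
  have "hjcf (a # b # r) = of_int a - 1 / (of_int N / of_int D)"
    using 3 N_def D_def by simp
  also have "\<dots> = (of_int a * of_int N - of_int D) / of_int N" using N
    by (simp add: field_simps)
  finally show ?case using N_def D_def by simp
qed

lemma nd_coprime: "coprime (fst (nd as)) (snd (nd as))"
proof (induction as)
  case Nil
  then show ?case by simp
next
  case (Cons a r)
  have "gcd (fst (nd r)) (a * fst (nd r) + - snd (nd r)) = gcd (fst (nd r)) (- snd (nd r))"
    by (rule gcd_add_mult)
  then have "coprime (fst (nd r)) (a * fst (nd r) - snd (nd r))"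
    using Cons by (simp add: coprime_iff_gcd_eq_1 algebra_simps)
  then show ?case
    by (simp add: coprime_commute)
qed

theorem mainTheorem7:
  fixes p q :: int and as :: "int list"
  assumes "0 < q" and "q < p" and "coprime p q"
    and "as \<noteq> []" and "\<forall>a \<in> set as. a \<ge> 2"
    and "of_int p / of_int q = hjcf as"
  shows "prod_list (map (\<lambda>a. a - 1) as) \<le> p
    \<and> hd as * prod_list (map (\<lambda>a. a - 1) (tl as)) \<le> p
    \<and> prod_list (map (\<lambda>a. a - 1) (butlast as)) * last as \<le> p"
proof -
  define N where "N = fst (nd as)"
  define D where "D = snd (nd as)"
  have B: "N - D \<ge> prod_list (map (\<lambda>a. a - 1) as)" "D \<ge> 0"
    "N \<ge> hd as * prod_list (map (\<lambda>a. a - 1) (tl as))"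
    "prod_list (map (\<lambda>a. a - 1) as) \<ge> 1"
    using nd_basic[OF assms(5)] N_def D_def assms(4) by auto
  have L: "N \<ge> prod_list (map (\<lambda>a. a - 1) (butlast as)) * last as"
    using nd_last[OF assms(5,4)] N_def by simp
  have cop: "coprime N D" using nd_coprime N_def D_def by simp
  have eq: "(of_int p / of_int q :: rat) = of_int N / of_int D"
    using assms(6) nd_hjcf[OF assms(5,4)] N_def D_def by simp
  have Dpos: "D > 0"
  proof (rule ccontr)
    assume "\<not> D > 0"
    then have "D = 0" using B by simp
    then show False using eq assms(1,2) by simp
  qed
  have "of_int (p * D) = (of_int (N * q) :: rat)" using eq Dpos assms(1)
    by (simp add: field_simps)
  then have pd: "p * D = N * q" by (simp only: of_int_eq_iff)
  have "p dvd N * q" using pd by (metis dvd_triv_left)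
  then have "p dvd N" using assms(3) by (simp add: coprime_dvd_mult_left_iff)
  moreover have "N dvd p * D" using pd by (metis dvd_triv_left)
  then have "N dvd p" using cop by (simp add: coprime_dvd_mult_left_iff)
  moreover have "N > 0" "p > 0" using B assms by auto
  ultimately have "p = N" by (simp add: zdvd_antisym_nonneg)
  then show ?thesis using B L by auto
qed

end
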